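(* Let $D=pq$ with $p\neq q$ odd primes, let $r$ be a positive integer with $2rD$ square-free, and let $d$ be a (possibly negative) integer with $d\mid rD$. Let $C_d$ be the curve $W^2=d+\frac{8rD}{d}Z^4$. Then: (1) $C_d(\mathbb{Q}_2)\neq\emptyset$ if and only if $d\equiv1\pmod 8$; (2) for any prime $t\mid \frac{rD}{d}$, $C_d(\mathbb{Q}_t)\neq\emptyset$ if and only if $\left(\frac{d}{t}\right)=1$; (3) for any prime $l\mid d$, $C_d(\mathbb{Q}_l)\neq\emptyset$ if and only if $\left(\frac{2rD/d}{l}\right)=1$.
   Context: $\left(\frac{\cdot}{\cdot}\right)$ denotes the Legendre symbol; $C_d(\mathbb{Q}_v)$ denotes the set of $\mathbb{Q}_v$-points $(Z,W)$ of the affine curve. *)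

theory Defs
  imports Complex_Main "HOL-Number_Theory.Number_Theory" "HOL-Computational_Algebra.Squarefree"
begin

definition padic_val :: "int \<Rightarrow> rat \<Rightarrow> int" where
  "padic_val p x = int (multiplicity p (fst (quotient_of x)))
                   - int (multiplicity p (snd (quotient_of x)))"

definition padic_abs :: "int \<Rightarrow> rat \<Rightarrow> real" where
  "padic_abs p x = (if x = 0 then 0 else real_of_int p powr (- real_of_int (padic_val p x)))"

definition padic_cauchy :: "int \<Rightarrow> (nat \<Rightarrow> rat) \<Rightarrow> bool" where
  "padic_cauchy p X \<longleftrightarrow> (\<forall>e>0. \<exists>N. \<forall>m\<ge>N. \<forall>n\<ge>N. padic_abs p (X m - X n) < e)"

definition padic_tendsto_zero :: "int \<Rightarrow> (nat \<Rightarrow> rat) \<Rightarrow> bool" where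
  "padic_tendsto_zero p X \<longleftrightarrow> (\<forall>e>0. \<exists>N. \<forall>n\<ge>N. padic_abs p (X n) < e)"

text \<open>\<open>C(\<Q>_p) \<noteq> \<emptyset>\<close> for the affine curve \<open>W^2 = a + b Z^4\<close>.
  \<open>\<Q>_p\<close> is the completion of \<open>\<Q>\<close> w.r.t. the p-adic absolute value, so a
  \<open>\<Q>_p\<close>-point is a pair of p-adic Cauchy sequences of rationals (representing
  \<open>(Z,W)\<close>) along which \<open>W^2 - a - b Z^4\<close> tends p-adically to 0
  (the polynomial is continuous, so its value at the limit point is 0).\<close>
definition has_Qp_point :: "int \<Rightarrow> int \<Rightarrow> int \<Rightarrow> bool" where
  "has_Qp_point p a b \<longleftrightarrow>
     (\<exists>Z W. padic_cauchy p Z \<and> padic_cauchy p W \<and>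
        padic_tendsto_zero p (\<lambda>n. (W n)^2 - of_int a - of_int b * (Z n)^4))"

end

theory Submission
  imports Defs
begin

lemma rat_repr: fixes x :: rat obtains a b where "x = of_int a / of_int b" "b > 0" "coprime a b"
proof -
  obtain a b where q: "quotient_of x = (a,b)" by (cases "quotient_of x") auto
  show thesis using that quotient_of_div[OF q] quotient_of_denom_pos[OF q] quotient_of_coprime[OF q] by blast
qed

lemma pv_int: "padic_val p (of_int a) = int (multiplicity p a)"
  by (simp add: padic_val_def quotient_of_int)

lemma pv_frac:
  assumes p: "prime p" and a: "a \<noteq> 0" and b: "b \<noteq> 0"
  shows "padic_val p (of_int a / of_int b) = int (multiplicity p a) - int (multiplicity p b)"
proof -
  obtain a' b' where q: "quotient_of (of_int a / of_int b) = (a', b')" by (cases "quotient_of (of_int a / of_int b)") auto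
  have e: "(of_int a / of_int b :: rat) = of_int a' / of_int b'" using quotient_of_div[OF q] .
  have b': "b' > 0" using quotient_of_denom_pos[OF q] .
  have "of_int a * of_int b' = (of_int a' * of_int b :: rat)" using e b b'
    by (simp add: field_simps)
  hence eq: "a * b' = a' * b" by (metis of_int_eq_iff of_int_mult)
  have a': "a' \<noteq> 0" using eq a b' by auto
  have pe: "prime_elem p" using p by (rule prime_imp_prime_elem)
  have "multiplicity p (a*b') = multiplicity p (a'*b)" using eq by simp
  hence "multiplicity p a + multiplicity p b' = multiplicity p a' + multiplicity p b"
    using prime_elem_multiplicity_mult_distrib[OF pe] a b a' b' by (metis less_irrefl)
  thus ?thesis using q by (simp add: padic_val_def)
qed

lemma rat_repr_nz: fixes x :: rat assumes "x \<noteq> 0" obtains a b where "x = of_int a / of_int b" "a \<noteq> 0" "b \<noteq> 0"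
  using assms by (metis rat_repr div_0 less_irrefl of_int_0)

lemma pv_mult: assumes p: "prime p" and "x \<noteq> 0" "y \<noteq> 0"
  shows "padic_val p (x*y) = padic_val p x + padic_val p y"
proof -
  obtain a b where x: "x = of_int a / of_int b" "a \<noteq> 0" "b \<noteq> 0" using rat_repr_nz assms by blast
  obtain c e where y: "y = of_int c / of_int e" "c \<noteq> 0" "e \<noteq> 0" using rat_repr_nz assms by blast
  have pe: "prime_elem p" using p by (rule prime_imp_prime_elem)
  have xy: "x*y = of_int (a*c) / of_int (b*e)" using x y by simp
  have "padic_val p (x*y) = int (multiplicity p (a*c)) - int (multiplicity p (b*e))"
    unfolding xy by (rule pv_frac[OF p]) (use x y in auto)
  also have "\<dots> = (int (multiplicity p a) - int (multiplicity p b)) + (int (multiplicity p c) - int (multiplicity p e))"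
    using prime_elem_multiplicity_mult_distrib[OF pe] x y by simp
  also have "\<dots> = padic_val p x + padic_val p y"
    using pv_frac[OF p] x y by simp
  finally show ?thesis .
qed

lemma pv_uminus: "padic_val p (-x) = padic_val p x"
proof -
  have "quotient_of (-x) = (- fst (quotient_of x), snd (quotient_of x))"
    by (simp add: rat_uminus_code Let_def split: prod.split)
  thus ?thesis by (simp add: padic_val_def)
qed

lemma pv_add: assumes p: "prime p" and nz: "x \<noteq> 0" "y \<noteq> 0" "x + y \<noteq> 0"
  shows "padic_val p (x+y) \<ge> min (padic_val p x) (padic_val p y)"
proof -
  obtain a b where x: "x = of_int a / of_int b" "a \<noteq> 0" "b \<noteq> 0" using rat_repr_nz nz by blast
  obtain c e where y: "y = of_int c / of_int e" "c \<noteq> 0" "e \<noteq> 0" using rat_repr_nz nz by blast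
  have s: "x+y = of_int (a*e + c*b) / of_int (b*e)" using x y by (simp add: field_simps)
  have sn: "a*e + c*b \<noteq> 0" by (metis s nz(3) div_0 of_int_0)
  have pe: "prime_elem p" using p by (rule prime_imp_prime_elem)
  define k where "k = min (multiplicity p (a*e)) (multiplicity p (c*b))"
  have "p^k dvd a*e" unfolding k_def by (rule multiplicity_dvd') simp
  moreover have "p^k dvd c*b" unfolding k_def by (rule multiplicity_dvd') simp
  ultimately have "p^k dvd a*e + c*b" by simp
  hence kle: "k \<le> multiplicity p (a*e+c*b)" using multiplicity_geI sn p
    by (metis not_prime_unit prime_gt_0_int less_irrefl)
  have v: "padic_val p (x+y) = int (multiplicity p (a*e+c*b)) - int (multiplicity p (b*e))"
    unfolding s by (rule pv_frac[OF p]) (use x y sn in auto)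
  have m1: "multiplicity p (a*e) = multiplicity p a + multiplicity p e"
    using prime_elem_multiplicity_mult_distrib[OF pe] x y by simp
  have m2: "multiplicity p (c*b) = multiplicity p c + multiplicity p b"
    using prime_elem_multiplicity_mult_distrib[OF pe] x y by simp
  have m3: "multiplicity p (b*e) = multiplicity p b + multiplicity p e"
    using prime_elem_multiplicity_mult_distrib[OF pe] x y by simp
  have vx: "padic_val p x = int (multiplicity p a) - int (multiplicity p b)" using pv_frac[OF p] x by simp
  have vy: "padic_val p y = int (multiplicity p c) - int (multiplicity p e)" using pv_frac[OF p] y by simp
  show ?thesis using kle unfolding v vx vy m3 k_def m1 m2 by linarith
qed

lemma pv_one: "padic_val p 1 = 0" using pv_int[of p 1] by simp

lemma pv_inverse: assumes p: "prime p" and "x \<noteq> 0" shows "padic_val p (inverse x) = - padic_val p x"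
  using pv_mult[OF p, of x "inverse x"] assms pv_one by simp

lemma pv_pow: assumes p: "prime p" and "x \<noteq> 0" shows "padic_val p (x^n) = int n * padic_val p x"
  by (induction n) (use assms pv_mult pv_one in \<open>auto simp: algebra_simps\<close>)


definition gev :: "int \<Rightarrow> rat \<Rightarrow> int \<Rightarrow> bool" where
  "gev p x k \<longleftrightarrow> x = 0 \<or> k \<le> padic_val p x"

lemma gev_mono: "gev p x k \<Longrightarrow> j \<le> k \<Longrightarrow> gev p x j" by (auto simp: gev_def)

lemma gev_add: assumes "prime p" "gev p x k" "gev p y k" shows "gev p (x+y) k"
proof (cases "x = 0 \<or> y = 0 \<or> x + y = 0")
  case True thus ?thesis using assms by (auto simp: gev_def)
next
  case False
  hence "min (padic_val p x) (padic_val p y) \<le> padic_val p (x+y)" using pv_add[OF assms(1)] by blast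
  thus ?thesis using False assms(2,3) by (auto simp: gev_def)
qed

lemma gev_uminus: "gev p (-x) k = gev p x k" by (auto simp: gev_def pv_uminus)

lemma gev_diff: assumes "prime p" "gev p x k" "gev p y k" shows "gev p (x-y) k"
  using gev_add[OF assms(1,2), of "-y"] assms(3) gev_uminus by simp

lemma gev_mult: assumes "prime p" "gev p x k" "gev p y j" shows "gev p (x*y) (k+j)"
proof (cases "x = 0 \<or> y = 0")
  case True thus ?thesis by (auto simp: gev_def)
next
  case False
  hence "padic_val p (x*y) = padic_val p x + padic_val p y" using pv_mult[OF assms(1)] by blast
  thus ?thesis using False assms(2,3) by (auto simp: gev_def)
qed

lemma gev_int: "gev p (of_int a) 0" by (simp add: gev_def pv_int)

lemma strict: assumes p: "prime p" and x: "x \<noteq> 0" and y: "gev p y (padic_val p x + 1)"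
  shows "x + y \<noteq> 0 \<and> padic_val p (x+y) = padic_val p x"
proof -
  have ny: "gev p (-y) (padic_val p x + 1)" using y gev_uminus by simp
  have "\<not> gev p (x+y) (padic_val p x + 1)"
  proof
    assume "gev p (x+y) (padic_val p x + 1)"
    hence "gev p (x + y + -y) (padic_val p x + 1)" using gev_add[OF p _ ny] by blast
    thus False using x by (simp add: gev_def)
  qed
  hence ne: "x + y \<noteq> 0" and lt: "padic_val p (x+y) \<le> padic_val p x" by (auto simp: gev_def)
  have "padic_val p (x+y) \<ge> padic_val p x"
  proof (cases "y = 0")
    case False thus ?thesis using pv_add[OF p x False ne] y by (auto simp: gev_def)
  qed simp
  thus ?thesis using ne lt by simp
qed

lemma gev_sq_nonneg: assumes p: "prime p" and "gev p (w^2) 0" shows "gev p w 0"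
proof (cases "w = 0")
  case False
  hence "padic_val p (w^2) = 2 * padic_val p w" "w^2 \<noteq> 0" using pv_pow[OF p, of w 2] by auto
  thus ?thesis using assms(2) by (auto simp: gev_def)
qed (simp add: gev_def)

lemma extract_pt: assumes p: "prime p" and h: "has_Qp_point p a b"
  shows "\<exists>z w. gev p (w^2 - of_int a - of_int b * z^4) K"
proof -
  obtain Z W where t: "padic_tendsto_zero p (\<lambda>n. (W n)^2 - of_int a - of_int b * (Z n)^4)"
    using h unfolding has_Qp_point_def by blast
  have p1: "real_of_int p > 1" using p prime_gt_1_int by simp
  have "real_of_int p powr (- real_of_int K) > 0" using p1 by simp
  then obtain N where "padic_abs p ((W N)^2 - of_int a - of_int b * (Z N)^4) < real_of_int p powr (- real_of_int K)"
    using t unfolding padic_tendsto_zero_def by blast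
  hence "gev p ((W N)^2 - of_int a - of_int b * (Z N)^4) K"
    using p1 by (auto simp: padic_abs_def gev_def split: if_splits)
  thus ?thesis by blast
qed

lemma SQ: assumes p: "prime p" and q: "gev p q 0" and h: "gev p (q^2 - of_int c) (int k)"
  shows "\<exists>m. [m^2 = c] (mod p^k)"
proof -
  obtain a b where x: "q = of_int a / of_int b" "b > 0" "coprime a b" using rat_repr by blast
  have pe: "prime_elem p" using p by (rule prime_imp_prime_elem)
  have nb: "\<not> p dvd b"
  proof
    assume pb: "p dvd b"
    hence "\<not> p dvd a" using x(3) p by (metis coprime_common_divisor not_prime_unit)
    hence a0: "multiplicity p a = 0" and an: "a \<noteq> 0" by (auto simp: not_dvd_imp_multiplicity_0)
    have "multiplicity p b > 0" using pb x(2) multiplicity_gt_zero_iff[of b p] not_prime_unit p by auto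
    moreover have "padic_val p q = int (multiplicity p a) - int (multiplicity p b)"
      unfolding x(1) by (rule pv_frac[OF p an]) (use x in auto)
    moreover have "q \<noteq> 0" using an x by simp
    ultimately show False using q a0 by (simp add: gev_def)
  qed
  have e: "q^2 - of_int c = of_int (a^2 - c*b^2) / of_int (b^2)" using x by (simp add: power_divide diff_divide_distrib)
  have dv: "p^k dvd a^2 - c*b^2"
  proof (cases "a^2 - c*b^2 = 0")
    case False
    have "padic_val p (q^2 - of_int c) = int (multiplicity p (a^2 - c*b^2)) - int (multiplicity p (b^2))"
      unfolding e by (rule pv_frac[OF p False]) (use x in auto)
    moreover have "multiplicity p (b^2) = 0" using nb pe x(2)
      by (simp add: prime_elem_multiplicity_power_distrib not_dvd_imp_multiplicity_0)
    moreover have "q^2 - of_int c \<noteq> 0" unfolding e using False x(2) by (metis divide_eq_0_iff of_int_eq_0_iff power_not_zero less_irrefl)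
    ultimately have "k \<le> multiplicity p (a^2 - c*b^2)" using h by (simp add: gev_def)
    thus ?thesis by (rule multiplicity_dvd')
  qed simp
  have "coprime b (p^k)" using nb p by (metis coprime_commute coprime_power_right_iff prime_imp_coprime)
  then obtain b' where b': "[b * b' = 1] (mod p^k)" using cong_solve_coprime_int by blast
  have c1: "[a^2 = c*b^2] (mod p^k)" using dv by (simp add: cong_iff_dvd_diff)
  have "[(a*b')^2 = c*b^2*b'^2] (mod p^k)" using cong_mult[OF c1 cong_refl[of "b'^2"]] by (simp add: power_mult_distrib)
  moreover have "[c*b^2*b'^2 = c * 1^2] (mod p^k)"
    using cong_mult[OF cong_refl[of c] cong_pow[OF b', of 2]] by (simp add: power_mult_distrib mult.assoc)
  ultimately have "[(a*b')^2 = c] (mod p^k)" using cong_trans by fastforce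
  thus ?thesis by blast
qed




lemma pabs_small: assumes p: "prime p" and d: "p^n dvd m"
  shows "padic_abs p (of_int m) \<le> real_of_int p powr (- real n)"
proof (cases "m = 0")
  case False
  have "n \<le> multiplicity p m" using multiplicity_geI[OF False _ d] p not_prime_unit by blast
  moreover have "real_of_int p > 1" using p prime_gt_1_int by simp
  ultimately show ?thesis using False by (simp add: padic_abs_def pv_int)
qed (simp add: padic_abs_def)

lemma small_exists: assumes p: "prime p" and e: "(e::real) > 0"
  shows "\<exists>N. real_of_int p powr (- real N) < e"
proof -
  have p1: "real_of_int p > 1" using p prime_gt_1_int by simp
  obtain N where "(1 / real_of_int p)^N < e" using real_arch_pow_inv[OF e, of "1/real_of_int p"] p1 by auto
  moreover have "real_of_int p powr (- real N) = (1 / real_of_int p)^N"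
    using p1 by (simp add: powr_minus powr_realpow power_one_over inverse_eq_divide)
  ultimately show ?thesis by metis
qed

lemma fwd:
  assumes p: "prime p"
    and sol: "\<And>n. p^n dvd (W n)^2 - (a + b*z0^4)"
    and cau: "\<And>N m. N \<le> m \<Longrightarrow> [W m = W N] (mod p^N)"
  shows "has_Qp_point p a b"
  unfolding has_Qp_point_def
proof (intro exI conjI)
  show "padic_cauchy p (\<lambda>n. of_int z0)"
    unfolding padic_cauchy_def by (simp add: padic_abs_def)
  show "padic_cauchy p (\<lambda>n. of_int (W n))"
    unfolding padic_cauchy_def
  proof (intro allI impI)
    fix e :: real assume "e > 0"
    then obtain N where N: "real_of_int p powr (- real N) < e" using small_exists[OF p] by blast
    have "\<forall>m\<ge>N. \<forall>n\<ge>N. padic_abs p (of_int (W m) - of_int (W n)) < e"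
    proof (intro allI impI)
      fix m n assume mn: "N \<le> m" "N \<le> n"
      have "[W m = W n] (mod p^N)" using cau[OF mn(1)] cau[OF mn(2)] by (meson cong_sym cong_trans)
      hence "p^N dvd W m - W n" by (simp add: cong_iff_dvd_diff)
      from pabs_small[OF p this] N show "padic_abs p (of_int (W m) - of_int (W n)) < e" by simp
    qed
    thus "\<exists>N. \<forall>m\<ge>N. \<forall>n\<ge>N. padic_abs p (of_int (W m) - of_int (W n)) < e" by blast
  qed
  show "padic_tendsto_zero p (\<lambda>n. (of_int (W n))\<^sup>2 - of_int a - of_int b * (of_int z0)^4)"
    unfolding padic_tendsto_zero_def
  proof (intro allI impI)
    fix e :: real assume "e > 0"
    then obtain N where N: "real_of_int p powr (- real N) < e" using small_exists[OF p] by blast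
    have "\<forall>n\<ge>N. padic_abs p ((of_int (W n))\<^sup>2 - of_int a - of_int b * (of_int z0)^4) < e"
    proof (intro allI impI)
      fix n assume n: "N \<le> n"
      have "p^N dvd p^n" using n by (simp add: le_imp_power_dvd)
      hence "p^N dvd (W n)^2 - (a + b*z0^4)" using sol dvd_trans by blast
      from pabs_small[OF p this] N
      have "padic_abs p (of_int ((W n)^2 - (a + b*z0^4))) < e" by simp
      thus "padic_abs p ((of_int (W n))\<^sup>2 - of_int a - of_int b * (of_int z0)^4) < e" by (simp add: algebra_simps)
    qed
    thus "\<exists>N. \<forall>n\<ge>N. padic_abs p ((of_int (W n))\<^sup>2 - of_int a - of_int b * (of_int z0)^4) < e" by blast
  qed
qed



lemma chain_cong:
  assumes "\<And>n. [W (Suc n) = W n] (mod (p::int)^n)" "N \<le> m"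
  shows "[W m = W N] (mod p^N)"
  using assms(2)
proof (induction m)
  case (Suc m)
  show ?case
  proof (cases "N = Suc m")
    case False
    hence "N \<le> m" using Suc by simp
    hence "[W m = W N] (mod p^N)" using Suc by simp
    moreover have "[W (Suc m) = W m] (mod p^N)"
      using cong_dvd_modulus[OF assms(1)[of m]] \<open>N \<le> m\<close> by (simp add: le_imp_power_dvd)
    ultimately show ?thesis using cong_trans by blast
  qed simp
qed simp

lemma hensel_odd_step:
  fixes p x c :: int
  assumes p: "prime p" "odd p" and x: "[x^2 = c] (mod p^(Suc n))" "\<not> p dvd x"
  shows "\<exists>y. [y = x] (mod p^(Suc n)) \<and> [y^2 = c] (mod p^(Suc (Suc n))) \<and> \<not> p dvd y"
proof -
  have "p^(Suc n) dvd x^2 - c" using x(1) by (simp only: cong_iff_dvd_diff)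
  then obtain g where g: "x^2 - c = p^(Suc n) * g" by (elim dvdE)
  have n2: "\<not> p dvd 2"
  proof
    assume "p dvd 2"
    hence "p \<le> 2" by (simp add: zdvd_imp_le)
    moreover have "p \<ge> 2" using p prime_ge_2_int by blast
    ultimately have "p = 2" by simp
    thus False using p(2) by simp
  qed
  have "\<not> p dvd 2*x" using n2 x(2) p(1) prime_dvd_mult_iff by blast
  hence "coprime p (2*x)" using p(1) prime_imp_coprime by blast
  hence "coprime (2*x) p" by (simp add: coprime_commute)
  then obtain i where i: "[2*x*i = 1] (mod p)" using cong_solve_coprime_int by blast
  define k where "k = - g * i"
  define y where "y = x + k * p^(Suc n)"
  have "[g + 2*x*k = g + - g * (2*x*i)] (mod p)" unfolding k_def by (simp add: algebra_simps)
  moreover have "[g + - g * (2*x*i) = g + - g * 1] (mod p)" using i by (intro cong_add cong_mult) auto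
  ultimately have "[g + 2*x*k = 0] (mod p)" using cong_trans by fastforce
  hence "p dvd g + 2*x*k + k^2 * p^(Suc n)" by (simp add: cong_0_iff)
  then obtain h where h: "g + 2*x*k + k^2 * p^(Suc n) = p * h" by (elim dvdE)
  have "y^2 - c = p^(Suc n) * (g + 2*x*k + k^2 * p^(Suc n))" unfolding y_def using g
    by (simp add: algebra_simps power2_eq_square)
  also have "\<dots> = p^(Suc (Suc n)) * h" using h by simp
  finally have 2: "[y^2 = c] (mod p^(Suc (Suc n)))" unfolding cong_iff_dvd_diff by simp
  have 1: "[y = x] (mod p^(Suc n))" unfolding y_def cong_iff_dvd_diff by simp
  have "p dvd k * p^(Suc n)" by simp
  hence "\<not> p dvd y" using x(2) unfolding y_def using dvd_add_left_iff by blast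
  thus ?thesis using 1 2 by blast
qed

lemma hensel_odd:
  fixes p x c :: int
  assumes p: "prime p" "odd p" and x: "[x^2 = c] (mod p)" "\<not> p dvd x"
  shows "\<exists>W. (\<forall>n. p^n dvd (W n)^2 - c) \<and> (\<forall>n. [W (Suc n) = W n] (mod p^n))"
proof -
  have "\<exists>W. \<forall>n. ([(W n)^2 = c] (mod p^(Suc n)) \<and> \<not> p dvd W n) \<and> [W (Suc n) = W n] (mod p^(Suc n))"
  proof (rule dependent_nat_choice)
    show "\<exists>y. [y^2 = c] (mod p^(Suc 0)) \<and> \<not> p dvd y" using x by (intro exI[of _ x]) simp
    fix y n assume "[y^2 = c] (mod p^(Suc n)) \<and> \<not> p dvd y"
    then obtain z where "[z = y] (mod p^(Suc n))" "[z^2 = c] (mod p^(Suc (Suc n)))" "\<not> p dvd z"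
      using hensel_odd_step[OF p, of y c n] by blast
    thus "\<exists>z. ([z^2 = c] (mod p^(Suc (Suc n))) \<and> \<not> p dvd z) \<and> [z = y] (mod p^(Suc n))" by blast
  qed
  then obtain W where W: "\<And>n. [(W n)^2 = c] (mod p^(Suc n))" "\<And>n. [W (Suc n) = W n] (mod p^(Suc n))" by blast
  have d: "\<And>n. p^n dvd p^(Suc n)" by simp
  have "\<And>n. p^n dvd (W n)^2 - c"
    using W(1) d unfolding cong_iff_dvd_diff using dvd_trans by blast
  moreover have "\<And>n. [W (Suc n) = W n] (mod p^n)"
    using W(2) d cong_dvd_modulus by blast
  ultimately show ?thesis by blast
qed


lemma hensel_2_step:
  assumes x: "[x^2 = c] (mod 2^(n+3))" "odd (x::int)"
  shows "\<exists>y. [y = x] (mod 2^(n+2)) \<and> [y^2 = c] (mod 2^(n+4)) \<and> odd y"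
proof -
  obtain g where g: "x^2 - c = 2^(n+3) * g" using x(1) by (metis cong_iff_dvd_diff dvdE)
  define k where "k = g mod 2"
  define y where "y = x + k * 2^(n+2)"
  have "even (g + k*x)" unfolding k_def using x(2) by (cases "even g") (auto simp: mod_2_eq_odd)
  hence "even (g + k*x + k^2 * 2^(n+1))" by simp
  then obtain h where h: "g + k*x + k^2 * 2^(n+1) = 2 * h" by blast
  have "y^2 - c = 2^(n+3) * (g + k*x + k^2 * 2^(n+1))" unfolding y_def using g
    by (simp add: algebra_simps power2_eq_square power_add)
  also have "\<dots> = 2^(n+4) * h" unfolding h by (simp add: power_add)
  finally have 2: "[y^2 = c] (mod 2^(n+4))" by (simp add: cong_iff_dvd_diff)
  have 1: "[y = x] (mod 2^(n+2))" unfolding y_def by (simp add: cong_iff_dvd_diff)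
  have "odd y" using x(2) unfolding y_def by simp
  thus ?thesis using 1 2 by blast
qed

lemma hensel_2:
  assumes "[c = 1] (mod 8)"
  shows "\<exists>W. (\<forall>n. 2^n dvd (W n)^2 - (c::int)) \<and> (\<forall>n. [W (Suc n) = W n] (mod 2^n))"
proof -
  have "\<exists>W. \<forall>n. ([(W n)^2 = c] (mod 2^(n+3)) \<and> odd (W n)) \<and> [W (Suc n) = W n] (mod 2^(n+2))"
  proof (rule dependent_nat_choice)
    show "\<exists>x. [x^2 = c] (mod 2^(0+3)) \<and> odd x" using assms cong_sym by (intro exI[of _ 1]) auto
    fix x n assume "[x^2 = c] (mod 2^(n+3)) \<and> odd x"
    then obtain y where y: "[y = x] (mod 2^(n+2))" "[y^2 = c] (mod 2^(n+4))" "odd y"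
      using hensel_2_step[of x c n] by blast
    have e: "(2::int)^(Suc n + 3) = 2^(n+4)" by simp
    show "\<exists>y. ([y^2 = c] (mod 2^(Suc n+3)) \<and> odd y) \<and> [y = x] (mod 2^(n+2))"
      unfolding e using y by blast
  qed
  then obtain W where W: "\<And>n. [(W n)^2 = c] (mod 2^(n+3))" "\<And>n. [W (Suc n) = W n] (mod 2^(n+2))" by blast
  have "\<And>n. 2^n dvd (W n)^2 - c"
    using W(1) by (meson cong_dvd_modulus cong_iff_dvd_diff le_imp_power_dvd le_add1)
  moreover have "\<And>n. [W (Suc n) = W n] (mod 2^n)"
    using W(2) by (meson cong_dvd_modulus le_imp_power_dvd le_add1)
  ultimately show ?thesis by blast
qed




lemma pv_zero: "padic_val p 0 = 0" using pv_int[of p 0] by simp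

lemma gev_pow0: assumes "prime p" "gev p x 0" shows "gev p (x^n) 0"
proof (induction n)
  case 0 thus ?case by (simp add: gev_def pv_one)
next
  case (Suc n) thus ?case using gev_mult[OF assms(1) assms(2) Suc] by simp
qed

lemma gev_pow: assumes "prime p" "gev p x k" "k \<ge> 0" shows "gev p (x^n) (int n * k)"
proof (cases "x = 0")
  case False thus ?thesis using assms pv_pow[OF assms(1) False, of n]
    by (auto simp: gev_def intro!: mult_left_mono)
qed (cases n, auto simp: gev_def pv_one)

lemma odd_sq_mod8: assumes "odd (m::int)" shows "[m^2 = 1] (mod 8)"
proof -
  obtain j where j: "m = 2*j+1" using assms by (metis oddE)
  have "even (j*(j+1))" by simp
  then obtain h where h: "j*(j+1) = 2*h" by blast
  have "m^2 - 1 = 8*h" using h unfolding j by (simp add: algebra_simps power2_eq_square)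
  thus ?thesis unfolding cong_iff_dvd_diff by simp
qed

lemma conv_unit:
  fixes p a b :: int and j :: int
  assumes p: "prime p" and vb: "padic_val p (of_int b) = j" and j: "j = 1 \<or> j = 3"
    and h: "has_Qp_point p a b"
  shows "\<exists>m. [m^2 = a] (mod p^(nat j))"
proof -
  obtain z w where G: "gev p (w^2 - of_int a - of_int b * z^4) j" using extract_pt[OF p h] by blast
  define X where "X = (of_int b :: rat) * z^4"
  define Y where "Y = (of_int a :: rat) + (w^2 - of_int a - of_int b * z^4)"
  have wXY: "w^2 = X + Y" unfolding X_def Y_def by simp
  have b0: "of_int b \<noteq> (0::rat)"
  proof
    assume "of_int b = (0::rat)" hence "b = 0" by simp
    thus False using vb j by (simp add: pv_zero)
  qed
  show ?thesis
  proof (cases "gev p z 0")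
    case True
    have gb: "gev p (of_int b) j" using vb by (simp add: gev_def)
    have "gev p X (j + 0)" unfolding X_def by (rule gev_mult[OF p gb gev_pow0[OF p True]])
    hence "gev p (w^2 - of_int a) j" using gev_add[OF p G, of X] unfolding X_def by simp
    moreover have "gev p (w^2) 0"
    proof -
      have "gev p ((w^2 - of_int a) + of_int a) 0"
        using gev_add[OF p gev_mono[OF calculation] gev_int[of p a]] j by auto
      thus ?thesis by simp
    qed
    hence "gev p w 0" by (rule gev_sq_nonneg[OF p])
    moreover have "int (nat j) = j" using j by auto
    ultimately show ?thesis using SQ[OF p, of w a "nat j"] by simp
  next
    case False
    hence z0: "z \<noteq> 0" and vz: "padic_val p z < 0" by (auto simp: gev_def)
    have vX: "padic_val p X = j + 4 * padic_val p z" "X \<noteq> 0"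
      unfolding X_def using pv_mult[OF p b0, of "z^4"] pv_pow[OF p z0, of 4] vb z0 b0 by auto
    have "gev p (w^2 - of_int a - of_int b * z^4) 0" using gev_mono[OF G] j by auto
    from gev_add[OF p gev_int[of p a] this] have "gev p Y 0" unfolding Y_def .
    hence "gev p Y (padic_val p X + 1)" using vX vz j by (auto intro: gev_mono)
    from strict[OF p vX(2) this] have "w^2 \<noteq> 0" "padic_val p (w^2) = j + 4 * padic_val p z"
      using wXY vX by auto
    moreover have "w \<noteq> 0" using calculation by auto
    ultimately have "2 * padic_val p w = j + 4 * padic_val p z" using pv_pow[OF p, of w 2] by simp
    hence False using j by presburger
    thus ?thesis ..
  qed
qed

lemma conv_l:
  fixes l a b c :: int
  assumes p: "prime l" and l4: "\<not> l dvd 4" and va: "padic_val l (of_int a) = 1" and bc: "b = 4 * c"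
    and h: "has_Qp_point l a b"
  shows "\<exists>m. [m^2 = c] (mod l)"
proof -
  obtain z w where G: "gev l (w^2 - of_int a - of_int b * z^4) 2" using extract_pt[OF p h] by blast
  define F where "F = w^2 - of_int a - of_int b * z^4"
  have a0: "of_int a \<noteq> (0::rat)"
  proof
    assume "of_int a = (0::rat)" hence "a = 0" by simp
    thus False using va by (simp add: pv_zero)
  qed
  show ?thesis
  proof (cases "gev l z 1")
    case True
    have "gev l (z^4) 4" using gev_pow[OF p True, of 4] by simp
    hence "gev l (of_int b * z^4) (0 + 4)" using gev_mult[OF p gev_int] by blast
    hence "gev l (of_int b * z^4 + F) 2" using gev_add[OF p _ G[folded F_def]] gev_mono by fastforce
    hence "gev l (of_int b * z^4 + F) (padic_val l (of_int a) + 1)" using va by simp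
    from strict[OF p a0 this] have "w^2 \<noteq> 0" "padic_val l (w^2) = 1"
      using va unfolding F_def by auto
    moreover have "w \<noteq> 0" using calculation by auto
    ultimately have "2 * padic_val l w = 1" using pv_pow[OF p, of w 2] by simp
    thus ?thesis by presburger
  next
    case False
    hence z0: "z \<noteq> 0" and vz: "padic_val l z \<le> 0" by (auto simp: gev_def)
    define q where "q = w / (2 * z^2)"
    have e: "q^2 - of_int c = (of_int a + F) * inverse (of_int 4 * z^4)"
      unfolding q_def F_def bc using z0 by (simp add: field_simps power2_eq_square power4_eq_xxxx)
    have v4: "padic_val l (of_int 4) = 0" using l4 pv_int[of l 4] not_dvd_imp_multiplicity_0[OF l4] by simp
    have ne: "of_int 4 * z^4 \<noteq> 0" using z0 by simp
    have A: "padic_val l (inverse (of_int 4 * z^4)) = - padic_val l (of_int 4 * z^4)" by (rule pv_inverse[OF p ne])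
    have B: "padic_val l (of_int 4 * z^4) = padic_val l (of_int 4) + padic_val l (z^4)" by (rule pv_mult[OF p]) (use z0 in auto)
    have "padic_val l (inverse (of_int 4 * z^4)) = - (padic_val l (of_int 4) + padic_val l (z^4))"
      unfolding A B ..
    also have "\<dots> = - 4 * padic_val l z" using v4 pv_pow[OF p z0, of 4] by simp
    finally have "gev l (inverse (of_int 4 * z^4)) 0" using vz by (simp add: gev_def)
    moreover have "gev l (of_int a + F) 1"
      using gev_add[OF p _ gev_mono[OF G[folded F_def]]] va by (simp add: gev_def)
    ultimately have g1: "gev l (q^2 - of_int c) 1" unfolding e using gev_mult[OF p] by fastforce
    have "gev l ((q^2 - of_int c) + of_int c) 0" using gev_add[OF p gev_mono[OF g1] gev_int[of l c]] by simp
    hence "gev l q 0" using gev_sq_nonneg[OF p] by simp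
    from SQ[OF p this, of c 1] g1 show ?thesis by simp
  qed
qed


lemma sqf_no: assumes "squarefree (n::int)" "prime t" "t^2 dvd n" shows False
  using assms unfolding squarefree_def using not_prime_unit by blast

lemma prime_dvd_2: assumes "prime (t::int)" "t dvd 2" shows "t = 2"
proof -
  have "t \<le> 2" using assms(2) by (simp add: zdvd_imp_le)
  moreover have "t \<ge> 2" using assms(1) prime_ge_2_int by blast
  ultimately show ?thesis by simp
qed

lemma mult_one: assumes "prime (t::int)" "t dvd n" "\<not> t^2 dvd n" shows "multiplicity t n = 1"
  by (rule multiplicity_eqI) (use assms in \<open>auto simp: power2_eq_square\<close>)

lemma leg1: "Legendre a p = 1 \<longleftrightarrow> \<not> p dvd a \<and> (\<exists>y. [y^2 = a] (mod p))"
  by (simp add: Legendre_def QuadRes_def cong_0_iff)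

theorem lemma2p1:
  fixes p q r d D :: int
  assumes "prime p" "prime q" "odd p" "odd q" "p \<noteq> q"
    and "D = p * q"
    and "r > 0"
    and "squarefree (2 * r * D)"
    and "d dvd r * D"
  shows "(has_Qp_point 2 d (8 * (r * D div d)) \<longleftrightarrow> [d = 1] (mod 8))
    \<and> (\<forall>t::int. prime t \<and> t dvd (r * D div d) \<longrightarrow>
          (has_Qp_point t d (8 * (r * D div d)) \<longleftrightarrow> Legendre d t = 1))
    \<and> (\<forall>l::int. prime l \<and> l dvd d \<longrightarrow>
          (has_Qp_point l d (8 * (r * D div d)) \<longleftrightarrow> Legendre (2 * (r * D div d)) l = 1))"
proof -
  define e where "e = r * D div d"
  have de: "d * e = r * D" unfolding e_def using assms(9) by simp
  have sf: "squarefree (2*(d*e))" using assms(8) unfolding de by (simp add: mult.assoc)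
  have sf2: "\<And>t. prime t \<Longrightarrow> t^2 dvd 2*(d*e) \<Longrightarrow> False" using sqf_no[OF sf] by blast
  have "odd (d*e)"
  proof
    assume "even (d*e)"
    hence "2^2 dvd 2*(d*e)" by auto
    thus False using sf2[of 2] by simp
  qed
  hence od: "odd d" and oe: "odd e" by auto
  have pe2: "prime_elem (2::int)" by simp
  have P1: "has_Qp_point 2 d (8 * e) \<longleftrightarrow> [d = 1] (mod 8)"
  proof
    assume h: "has_Qp_point 2 d (8 * e)"
    have "multiplicity 2 (2^3 * e) = multiplicity 2 ((2::int)^3) + multiplicity 2 e"
      by (rule prime_elem_multiplicity_mult_distrib[OF pe2]) (use oe in auto)
    also have "\<dots> = 3" using oe multiplicity_prime_power[OF pe2, of 3] not_dvd_imp_multiplicity_0[of 2 e] by simp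
    finally have "padic_val 2 (of_int (8*e)) = 3" using pv_int[of 2 "8*e"] by simp
    from conv_unit[OF _ this _ h] obtain m where m: "[m^2 = d] (mod 2^3)" by auto
    have m8: "[m^2 = d] (mod 8)" using m by simp
    have "8 dvd m^2 - d" using m8 by (simp add: cong_iff_dvd_diff)
    hence d2: "2 dvd m^2 - d" by (rule dvd_trans[rotated]) simp
    have "odd m"
    proof
      assume "even m"
      hence "2 dvd m^2" by (metis dvd_mult2 power2_eq_square)
      hence "2 dvd m^2 - (m^2 - d)" using d2 by (rule dvd_diff)
      hence "2 dvd d" by simp
      thus False using od by simp
    qed
    hence "[m^2 = 1] (mod 8)" by (rule odd_sq_mod8)
    from cong_trans[OF cong_sym[OF m8] this] show "[d = 1] (mod 8)" .
  next
    assume "[d = 1] (mod 8)"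
    from hensel_2[OF this] obtain W where W: "\<And>n. 2^n dvd (W n)^2 - d" "\<And>n. [W (Suc n) = W n] (mod 2^n)" by blast
    have cau: "\<And>N m. N \<le> m \<Longrightarrow> [W m = W N] (mod 2^N)" using chain_cong[of W 2] W(2) by blast
    show "has_Qp_point 2 d (8 * e)"
      by (rule fwd[of 2 W d "8*e" 0]) (use W(1) cau in simp_all)
  qed
  have P2: "has_Qp_point t d (8 * e) \<longleftrightarrow> Legendre d t = 1" if t: "prime t" "t dvd e" for t
  proof -
    have ot: "odd t"
    proof
      assume "even t"
      hence "2 dvd e" using t(2) dvd_trans[of 2 t e] by blast
      thus False using oe by simp
    qed
    have nd: "\<not> t dvd d"
    proof
      assume "t dvd d"
      hence "t*t dvd d*e" using t(2) by (rule mult_dvd_mono)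
      hence "t^2 dvd 2*(d*e)" unfolding power2_eq_square by (rule dvd_mult)
      thus False using sf2 t(1) by blast
    qed
    have ne2: "\<not> t^2 dvd e"
    proof
      assume "t^2 dvd e"
      hence "t^2 dvd d*e" by (rule dvd_mult)
      hence "t^2 dvd 2*(d*e)" by (rule dvd_mult)
      thus False using sf2 t(1) by blast
    qed
    have n8: "\<not> t dvd 8"
    proof
      assume "t dvd 8"
      hence "t dvd 2" using prime_dvd_power_iff[OF t(1), of 3 2] by simp
      thus False using prime_dvd_2[OF t(1)] ot by auto
    qed
    have pet: "prime_elem t" using t(1) by (rule prime_imp_prime_elem)
    have "multiplicity t (8 * e) = multiplicity t 8 + multiplicity t e"
      by (rule prime_elem_multiplicity_mult_distrib[OF pet]) (use oe in auto)
    also have "\<dots> = 1" using mult_one[OF t ne2] not_dvd_imp_multiplicity_0[OF n8] by simp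
    finally have vb: "padic_val t (of_int (8*e)) = 1" using pv_int[of t "8*e"] by simp
    show ?thesis
    proof
      assume h: "has_Qp_point t d (8 * e)"
      from conv_unit[OF t(1) vb _ h] obtain m where "[m^2 = d] (mod t)" by auto
      thus "Legendre d t = 1" using nd leg1 by blast
    next
      assume "Legendre d t = 1"
      then obtain x where x: "[x^2 = d] (mod t)" using leg1 by blast
      have "\<not> t dvd x"
      proof
        assume "t dvd x" hence "t dvd x^2" by (metis dvd_mult2 power2_eq_square)
        hence "t dvd d" using cong_dvd_iff[OF x] by simp
        thus False using nd by simp
      qed
      from hensel_odd[OF t(1) ot x this] obtain W where
        W: "\<And>n. t^n dvd (W n)^2 - d" "\<And>n. [W (Suc n) = W n] (mod t^n)" by blast
      have cau: "\<And>N m. N \<le> m \<Longrightarrow> [W m = W N] (mod t^N)" using chain_cong[of W t] W(2) by blast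
      show "has_Qp_point t d (8 * e)"
        by (rule fwd[OF t(1), of W d "8*e" 0]) (use W(1) cau in simp_all)
    qed
  qed
  have P3: "has_Qp_point l d (8 * e) \<longleftrightarrow> Legendre (2 * e) l = 1" if l: "prime l" "l dvd d" for l
  proof -
    have ol: "odd l"
    proof
      assume "even l"
      hence "2 dvd d" using l(2) dvd_trans[of 2 l d] by blast
      thus False using od by simp
    qed
    have l2: "\<not> l dvd 2" using prime_dvd_2[OF l(1)] ol by auto
    have ne: "\<not> l dvd e"
    proof
      assume "l dvd e"
      hence "l*l dvd d*e" using l(2) mult_dvd_mono[of l d l e] by blast
      hence "l^2 dvd 2*(d*e)" unfolding power2_eq_square by (rule dvd_mult)
      thus False using sf2 l(1) by blast
    qed
    have n2e: "\<not> l dvd 2*e" using ne l2 prime_dvd_mult_iff[OF l(1), of 2 e] by simp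
    have nd2: "\<not> l^2 dvd d"
    proof
      assume "l^2 dvd d"
      hence "l^2 dvd d*e" by (rule dvd_mult2)
      hence "l^2 dvd 2*(d*e)" by (rule dvd_mult)
      thus False using sf2 l(1) by blast
    qed
    have l4: "\<not> l dvd 4" using prime_dvd_power_iff[OF l(1), of 2 2] l2 by simp
    have va: "padic_val l (of_int d) = 1" using mult_one[OF l nd2] pv_int[of l d] by simp
    have b4: "8*e = 4*(2*e)" by simp
    show ?thesis
    proof
      assume h: "has_Qp_point l d (8 * e)"
      from conv_l[OF l(1) l4 va b4 h] obtain m where "[m^2 = 2*e] (mod l)" by blast
      thus "Legendre (2*e) l = 1" using n2e leg1 by blast
    next
      assume "Legendre (2*e) l = 1"
      then obtain x where x: "[x^2 = 2*e] (mod l)" using leg1 by blast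
      have nx: "\<not> l dvd x"
      proof
        assume "l dvd x" hence "l dvd x^2" by (metis dvd_mult2 power2_eq_square)
        hence "l dvd 2*e" using cong_dvd_iff[OF x] by simp
        thus False using n2e by simp
      qed
      have n2x: "\<not> l dvd 2*x" using nx l2 prime_dvd_mult_iff[OF l(1), of 2 x] by simp
      have "[4*x^2 = 4 * (2*e)] (mod l)" using cong_mult[OF cong_refl[of 4] x] .
      hence "[(2*x)^2 = 4 * (2*e)] (mod l)" by (simp add: power_mult_distrib)
      moreover have "[4 * (2*e) = d + 8*e*1^4] (mod l)" using l(2) by (simp add: cong_iff_dvd_diff)
      ultimately have x2: "[(2*x)^2 = d + 8*e*1^4] (mod l)" by (rule cong_trans)
      from hensel_odd[OF l(1) ol x2 n2x] obtain W where
        W: "\<And>n. l^n dvd (W n)^2 - (d + 8*e*1^4)" "\<And>n. [W (Suc n) = W n] (mod l^n)" by blast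
      have cau: "\<And>N m. N \<le> m \<Longrightarrow> [W m = W N] (mod l^N)" using chain_cong[of W l] W(2) by blast
      show "has_Qp_point l d (8 * e)"
        by (rule fwd[OF l(1), of W d "8*e" 1]) (use W(1) cau in simp_all)
    qed
  qed
  show ?thesis unfolding e_def[symmetric] using P1 P2 P3 by blast
qed


end
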